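(* Let $m\ge 1$ and $p_1,\dots,p_m\in\mathbb N$, $\mathfrak p:=\sum_{i=1}^m p_i$. For each $i$ let $\Theta_i\subset\mathbb R^{p_i}$ be a bounded convex set and $\Theta:=\Theta_1\times\cdots\times\Theta_m\subset\mathbb R^{\mathfrak p}$. Write $\theta=(\theta^1,\dots,\theta^m)'$ with $\theta^i=(\theta^i_1,\dots,\theta^i_{p_i})$. Let $\theta_0=(\theta_0^1,\dots,\theta_0^m)'\in\Theta$ (the true value), and for each $i$ let $p_i^0\in\{0,\dots,p_i\}$ be such that $\theta^i_{0,j}\neq 0$ for $1\le j\le p_i^0$ and $\theta^i_{0,j}=0$ for $p_i^0<j\le p_i$. On a probability space $(\Omega,\mathcal F,P)$, for each $n$ let $\tilde\theta_n=(\tilde\theta_n^1,\dots,\tilde\theta_n^m)'$ be an $\mathbb R^{\mathfrak p}$-valued random vector, let $\hat G_n$ be a $\mathfrak p\times\mathfrak p$ random matrix which is almost surely symmetric and positive definite, let $q_1,\dots,q_m\in(0,1]$, and let $\lambda^i_{n,j}$ ($1\le i\le m$, $1\le j\le p_i$) be positive real random variables. Define $$\mathcal F_n(\theta):=(\theta-\tilde\theta_n)'\hat G_n(\theta-\tilde\theta_n)+\sum_{i=1}^m\sum_{j=1}^{p_i}\lambda^i_{n,j}|\theta^i_j|^{q_i},$$ and let $\hat\theta_n=(\hat\theta_n^1,\dots,\hat\theta_n^m)'$ be any minimizer of $\mathcal F_n$ over the closure $\overline\Theta$ (the adaptive Bridge-type estimator). Let $r_n^1,\dots,r_n^m$ be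 sequences of positive numbers tending to $0$, and $A_n:=\mathrm{diag}(r_n^1\mathbf I_{p_1},\dots,r_n^m\mathbf I_{p_m})$. Set $\hat{\mathfrak D}_n:=A_n\hat G_nA_n$ and $a_n^i:=\max\{\lambda^i_{n,j}: j\le p_i^0\}$. Assume: (A1) there is a $\mathfrak p\times\mathfrak p$ positive definite symmetric random matrix $G$ with $\hat{\mathfrak D}_n\to G$ in probability; (A2) $A_n^{-1}(\tilde\theta_n-\theta_0)=O_p(1)$; (B1) $r_n^ia_n^i=O_p(1)$ for every $i=1,\dots,m$. Then $A_n^{-1}(\hat\theta_n-\theta_0)=O_p(1)$.
   Context: $\mathbf I_k$ denotes the $k\times k$ identity matrix. $O_p(1)$ means bounded in probability (tight) as $n\to\infty$. The components $\theta^i_{0,j}$ denote the $j$-th coordinate of $\theta^i_0$. *)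

theory Defs
  imports "HOL-Probability.Probability"
begin

text \<open>Vectors in R^{p_1+...+p_m} are represented as functions on the index set
  of pairs (i,j), i < m, j < p i (block i, coordinate j, both 0-based), which
  vanish outside this index set.\<close>

definition idx :: "nat \<Rightarrow> (nat \<Rightarrow> nat) \<Rightarrow> (nat \<times> nat) set" where
  "idx m p = Sigma {..<m} (\<lambda>i. {..<p i})"

definition vnorm :: "(nat \<times> nat) set \<Rightarrow> (nat \<times> nat \<Rightarrow> real) \<Rightarrow> real" where
  "vnorm I x = sqrt (\<Sum>a\<in>I. (x a)\<^sup>2)"

text \<open>Subsets of R^k: functions nat => real vanishing from index k on.\<close>
definition is_vec :: "nat \<Rightarrow> (nat \<Rightarrow> real) \<Rightarrow> bool" where
  "is_vec k x \<longleftrightarrow> (\<forall>j\<ge>k. x j = 0)"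

definition convex_vec :: "(nat \<Rightarrow> real) set \<Rightarrow> bool" where
  "convex_vec S \<longleftrightarrow> (\<forall>x\<in>S. \<forall>y\<in>S. \<forall>t::real. 0 \<le> t \<and> t \<le> 1 \<longrightarrow>
      (\<lambda>j. t * x j + (1 - t) * y j) \<in> S)"

definition bounded_vec :: "nat \<Rightarrow> (nat \<Rightarrow> real) set \<Rightarrow> bool" where
  "bounded_vec k S \<longleftrightarrow> (\<exists>B. \<forall>x\<in>S. \<forall>j<k. \<bar>x j\<bar> \<le> B)"

definition theta_prod :: "nat \<Rightarrow> (nat \<Rightarrow> nat) \<Rightarrow> (nat \<Rightarrow> (nat \<Rightarrow> real) set)
    \<Rightarrow> (nat \<times> nat \<Rightarrow> real) set" where
  "theta_prod m p Th = {\<theta>. (\<forall>i<m. (\<lambda>j. \<theta> (i, j)) \<in> Th i) \<and>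
      (\<forall>a. a \<notin> idx m p \<longrightarrow> \<theta> a = 0)}"

definition vclosure :: "(nat \<times> nat) set \<Rightarrow> (nat \<times> nat \<Rightarrow> real) set \<Rightarrow> (nat \<times> nat \<Rightarrow> real) set" where
  "vclosure I S = {x. (\<forall>a. a \<notin> I \<longrightarrow> x a = 0) \<and>
      (\<forall>e>0. \<exists>y\<in>S. vnorm I (\<lambda>a. x a - y a) < e)}"

definition sym_mat :: "(nat \<times> nat) set \<Rightarrow> (nat \<times> nat \<Rightarrow> nat \<times> nat \<Rightarrow> real) \<Rightarrow> bool" where
  "sym_mat I G \<longleftrightarrow> (\<forall>a\<in>I. \<forall>b\<in>I. G a b = G b a)"

definition qform :: "(nat \<times> nat) set \<Rightarrow> (nat \<times> nat \<Rightarrow> nat \<times> nat \<Rightarrow> real)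
    \<Rightarrow> (nat \<times> nat \<Rightarrow> real) \<Rightarrow> real" where
  "qform I G x = (\<Sum>a\<in>I. \<Sum>b\<in>I. x a * G a b * x b)"

definition posdef_mat :: "(nat \<times> nat) set \<Rightarrow> (nat \<times> nat \<Rightarrow> nat \<times> nat \<Rightarrow> real) \<Rightarrow> bool" where
  "posdef_mat I G \<longleftrightarrow> sym_mat I G \<and>
     (\<forall>x. (\<exists>a\<in>I. x a \<noteq> 0) \<longrightarrow> qform I G x > 0)"

definition bounded_in_prob :: "'w measure \<Rightarrow> (nat \<Rightarrow> 'w \<Rightarrow> real) \<Rightarrow> bool" where
  "bounded_in_prob M X \<longleftrightarrow> (\<forall>n. X n \<in> borel_measurable M) \<and>
     (\<forall>e>0. \<exists>K. \<exists>N. \<forall>n\<ge>N. measure M {\<omega> \<in> space M. \<bar>X n \<omega>\<bar> > K} \<le> e)"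

definition conv_in_prob :: "'w measure \<Rightarrow> (nat \<Rightarrow> 'w \<Rightarrow> real) \<Rightarrow> ('w \<Rightarrow> real) \<Rightarrow> bool" where
  "conv_in_prob M X Y \<longleftrightarrow> (\<forall>n. X n \<in> borel_measurable M) \<and> Y \<in> borel_measurable M \<and>
     (\<forall>e>0. (\<lambda>n. measure M {\<omega> \<in> space M. \<bar>X n \<omega> - Y \<omega>\<bar> > e}) \<longlonglongrightarrow> 0)"

definition bridge_obj :: "nat \<Rightarrow> (nat \<Rightarrow> nat) \<Rightarrow> (nat \<Rightarrow> real)
   \<Rightarrow> (nat \<times> nat \<Rightarrow> nat \<times> nat \<Rightarrow> real) \<Rightarrow> (nat \<times> nat \<Rightarrow> real)
   \<Rightarrow> (nat \<Rightarrow> nat \<Rightarrow> real) \<Rightarrow> (nat \<times> nat \<Rightarrow> real) \<Rightarrow> real" where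
  "bridge_obj m p q G tt lam \<theta> =
     qform (idx m p) G (\<lambda>a. \<theta> a - tt a) +
     (\<Sum>i<m. \<Sum>j<p i. lam i j * \<bar>\<theta> (i, j)\<bar> powr q i)"

text \<open>a_n^i = max of lambda^i_{n,j} over j < p0 i (0 if p0 i = 0, i.e. empty max).\<close>
definition amax :: "(nat \<Rightarrow> real) \<Rightarrow> nat \<Rightarrow> real" where
  "amax lam k = Max (insert 0 (lam ` {..<k}))"

end

theory Submission
  imports Defs
begin


lemma powr_diff_bound:
  fixes x y q :: real
  assumes "x \<noteq> 0" "0 < q" "q \<le> 1"
  shows "\<bar>x\<bar> powr q - \<bar>y\<bar> powr q \<le> \<bar>x\<bar> powr (q - 1) * \<bar>x - y\<bar>"
proof -
  define s where "s = \<bar>x\<bar>"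
  define t where "t = \<bar>y\<bar>"
  have s: "s > 0" using assms s_def by auto
  have t: "t \<ge> 0" using t_def by auto
  have d: "s - t \<le> \<bar>x - y\<bar>" unfolding s_def t_def by linarith
  have sp: "s powr (q - 1) \<ge> 0" by simp
  show ?thesis
  proof (cases "t < s")
    case False
    then have "s powr q \<le> t powr q" using s assms by (intro powr_mono2) auto
    then show ?thesis using sp unfolding s_def[symmetric] t_def[symmetric]
      by (smt (verit) zero_le_mult_iff abs_ge_zero)
  next
    case True
    have key: "s powr (q - 1) * t \<le> t powr q"
    proof (cases "t = 0")
      case True then show ?thesis by simp
    next
      case False
      then have tp: "t > 0" using t by auto
      have "s powr (q - 1) \<le> t powr (q - 1)"
        using tp True assms by (intro powr_mono2') auto
      then have "s powr (q - 1) * t \<le> t powr (q - 1) * t" using tp by (intro mult_right_mono) auto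
      also have "t powr (q - 1) * t = t powr q" using tp by (simp add: powr_diff powr_add[symmetric])
      finally show ?thesis .
    qed
    have "s powr q = s powr (q - 1) * s" using s by (simp add: powr_diff)
    then have "s powr q - t powr q \<le> s powr (q - 1) * (s - t)" using key by (simp add: algebra_simps)
    also have "\<dots> \<le> s powr (q - 1) * \<bar>x - y\<bar>" using d sp by (intro mult_left_mono) auto
    finally show ?thesis unfolding s_def t_def .
  qed
qed

lemma abs_le_vnorm:
  assumes "finite I" "a \<in> I"
  shows "\<bar>x a\<bar> \<le> vnorm I x"
proof -
  have "(x a)\<^sup>2 \<le> (\<Sum>b\<in>I. (x b)\<^sup>2)" using assms by (intro member_le_sum) auto
  then show ?thesis unfolding vnorm_def by (metis real_le_rsqrt real_sqrt_abs2 sqrt_le_D power2_abs abs_ge_zero real_sqrt_le_iff)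
qed

lemma vnorm_nonneg: "vnorm I x \<ge> 0" unfolding vnorm_def by (simp add: sum_nonneg)

lemma vnorm_sq: "(vnorm I x)\<^sup>2 = (\<Sum>a\<in>I. (x a)\<^sup>2)" unfolding vnorm_def by (simp add: sum_nonneg)

lemma qform_cong:
  assumes "\<And>a. a \<in> I \<Longrightarrow> x a = y a"
  shows "qform I G x = qform I G y"
  unfolding qform_def using assms by (intro sum.cong refl) auto

lemma qform_split:
  "qform I D (\<lambda>a. u a - v a) = qform I D u - (\<Sum>a\<in>I. \<Sum>b\<in>I. u a * D a b * v b + v a * D a b * u b) + qform I D v"
  unfolding qform_def by (simp add: sum_subtractf[symmetric] sum.distrib[symmetric] algebra_simps)

lemma dsum_abs_bound:
  fixes u v :: "'a \<Rightarrow> real" and D :: "'a \<Rightarrow> 'a \<Rightarrow> real"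
  assumes "finite I" "\<And>a. a \<in> I \<Longrightarrow> \<bar>u a\<bar> \<le> U" "\<And>a. a \<in> I \<Longrightarrow> \<bar>v a\<bar> \<le> V"
  shows "\<bar>\<Sum>a\<in>I. \<Sum>b\<in>I. u a * D a b * v b\<bar> \<le> (\<Sum>a\<in>I. \<Sum>b\<in>I. \<bar>D a b\<bar>) * U * V"
proof -
  have "\<bar>\<Sum>a\<in>I. \<Sum>b\<in>I. u a * D a b * v b\<bar> \<le> (\<Sum>a\<in>I. \<bar>\<Sum>b\<in>I. u a * D a b * v b\<bar>)" by (rule sum_abs)
  also have "\<dots> \<le> (\<Sum>a\<in>I. \<Sum>b\<in>I. \<bar>u a * D a b * v b\<bar>)" by (intro sum_mono sum_abs)
  also have "\<dots> \<le> (\<Sum>a\<in>I. \<Sum>b\<in>I. \<bar>D a b\<bar> * U * V)"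
  proof (intro sum_mono)
    fix a b assume "a \<in> I" "b \<in> I"
    then have "\<bar>u a\<bar> * \<bar>v b\<bar> \<le> U * V" using assms by (intro mult_mono) (auto intro: order_trans[OF abs_ge_zero])
    then have "\<bar>D a b\<bar> * (\<bar>u a\<bar> * \<bar>v b\<bar>) \<le> \<bar>D a b\<bar> * (U * V)" by (intro mult_left_mono) auto
    then show "\<bar>u a * D a b * v b\<bar> \<le> \<bar>D a b\<bar> * U * V" by (simp add: abs_mult algebra_simps)
  qed
  also have "\<dots> = (\<Sum>a\<in>I. \<Sum>b\<in>I. \<bar>D a b\<bar>) * U * V" by (simp add: sum_distrib_right)
  finally show ?thesis .
qed

lemma qform_homog: "qform I G (\<lambda>a. t * x a) = t\<^sup>2 * qform I G x"
  unfolding qform_def by (simp add: sum_distrib_left power2_eq_square algebra_simps)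



lemma finite_subseq_conv:
  fixes z :: "nat \<Rightarrow> 'a \<Rightarrow> real"
  assumes "finite I" "\<forall>k. \<forall>a\<in>I. \<bar>z k a\<bar> \<le> B"
  shows "\<exists>s. strict_mono s \<and> (\<forall>a\<in>I. convergent (\<lambda>k. z (s k) a))"
  using assms
proof (induction I rule: finite_induct)
  case empty
  show ?case by (rule exI[of _ id]) (auto simp: strict_mono_def)
next
  case (insert a F)
  then obtain s where s: "strict_mono s" "\<forall>b\<in>F. convergent (\<lambda>k. z (s k) b)" by auto
  obtain t where t: "strict_mono t" "monoseq (\<lambda>n. z (s (t n)) a)"
    using seq_monosub[of "\<lambda>k. z (s k) a"] by blast
  have "Bseq (\<lambda>n. z (s (t n)) a)"
    using insert.prems by (intro BseqI'[of _ B]) auto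
  then have ca: "convergent (\<lambda>n. z (s (t n)) a)" using t by (intro Bseq_monoseq_convergent)
  have "\<forall>b\<in>F. convergent (\<lambda>k. z (s (t k)) b)"
    using s(2) convergent_subseq_convergent[OF _ t(1)] by (auto simp: o_def)
  then show ?case using ca s t by (intro exI[of _ "s \<circ> t"]) (auto simp: strict_mono_def)
qed

lemma pd_coercive:
  assumes fin: "finite I" and pd: "posdef_mat I G"
  shows "\<exists>c>0. \<forall>x. c * (\<Sum>a\<in>I. (x a)\<^sup>2) \<le> qform I G x"
proof (rule ccontr)
  assume "\<not> ?thesis"
  then have H: "\<forall>c>0. \<exists>x. c * (\<Sum>a\<in>I. (x a)\<^sup>2) > qform I G x" by (auto simp: not_le)
  have "\<forall>k. \<exists>z. (\<Sum>a\<in>I. (z a)\<^sup>2) = 1 \<and> qform I G z < 1 / Suc k"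
  proof
    fix k
    obtain x where x: "(1 / Suc k) * (\<Sum>a\<in>I. (x a)\<^sup>2) > qform I G x" using H[rule_format, of "1 / Suc k"] by auto
    define S where "S = (\<Sum>a\<in>I. (x a)\<^sup>2)"
    have S0: "S \<ge> 0" unfolding S_def by (simp add: sum_nonneg)
    have "S \<noteq> 0"
    proof
      assume "S = 0"
      then have "\<forall>a\<in>I. x a = 0" using fin unfolding S_def by (simp add: sum_nonneg_eq_0_iff)
      then have "qform I G x = 0" unfolding qform_def by simp
      then show False using x \<open>S = 0\<close> unfolding S_def by simp
    qed
    then have Sp: "S > 0" using S0 by auto
    define z where "z = (\<lambda>a. (1 / sqrt S) * x a)"
    have "(\<Sum>a\<in>I. (z a)\<^sup>2) = (\<Sum>a\<in>I. (x a)\<^sup>2 / S)"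
      unfolding z_def using Sp by (intro sum.cong) (auto simp: power_mult_distrib power_divide)
    also have "\<dots> = 1" using Sp unfolding S_def by (simp add: sum_divide_distrib[symmetric])
    finally have z1: "(\<Sum>a\<in>I. (z a)\<^sup>2) = 1" .
    have "qform I G z = qform I G x / S" unfolding z_def qform_homog using Sp
      by (simp add: power_divide)
    also have "\<dots> < 1 / Suc k" using x Sp unfolding S_def[symmetric] by (simp add: divide_simps mult.commute)
    finally show "\<exists>z. (\<Sum>a\<in>I. (z a)\<^sup>2) = 1 \<and> qform I G z < 1 / Suc k" using z1 by blast
  qed
  then obtain z where z: "\<And>k. (\<Sum>a\<in>I. (z k a)\<^sup>2) = 1" "\<And>k. qform I G (z k) < 1 / Suc k" by metis
  have zb: "\<bar>z k a\<bar> \<le> 1" if "a \<in> I" for k a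
  proof -
    have "(z k a)\<^sup>2 \<le> 1" using z(1)[of k] member_le_sum[of a I "\<lambda>a. (z k a)\<^sup>2"] that fin by auto
    then show ?thesis by (simp add: abs_square_le_1)
  qed
  obtain s where s: "strict_mono s" "\<forall>a\<in>I. convergent (\<lambda>k. z (s k) a)"
    using finite_subseq_conv[of I z 1] fin zb by blast
  define y where "y = (\<lambda>a. lim (\<lambda>k. z (s k) a))"
  have yl: "(\<lambda>k. z (s k) a) \<longlonglongrightarrow> y a" if "a \<in> I" for a
    using s(2) that unfolding y_def by (simp add: convergent_LIMSEQ_iff)
  have "(\<lambda>k. \<Sum>a\<in>I. (z (s k) a)\<^sup>2) \<longlonglongrightarrow> (\<Sum>a\<in>I. (y a)\<^sup>2)"
    by (intro tendsto_sum tendsto_power yl)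
  then have y1: "(\<Sum>a\<in>I. (y a)\<^sup>2) = 1" using z(1) by (simp add: LIMSEQ_const_iff)
  have ql: "(\<lambda>k. qform I G (z (s k))) \<longlonglongrightarrow> qform I G y"
    unfolding qform_def by (intro tendsto_sum tendsto_mult yl tendsto_const)
  have "(\<lambda>k. 1 / real (Suc k)) \<longlonglongrightarrow> 0" by (rule LIMSEQ_Suc[OF lim_inverse_n'])
  moreover have "qform I G (z (s k)) \<le> 1 / real (Suc k)" for k
  proof -
    have "k \<le> s k" using s(1) by (rule strict_mono_imp_increasing)
    then have "1 / real (Suc (s k)) \<le> 1 / real (Suc k)" by (intro divide_left_mono) auto
    then show ?thesis using z(2)[of "s k"] by linarith
  qed
  ultimately have "qform I G y \<le> 0" using ql by (intro LIMSEQ_le[OF ql]) auto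
  moreover have "\<exists>a\<in>I. y a \<noteq> 0" using y1 by (metis (no_types, lifting) power_zero_numeral sum.neutral zero_neq_one)
  ultimately show False using pd unfolding posdef_mat_def by force
qed



definition Dset :: "(nat \<times> nat) set \<Rightarrow> (nat \<times> nat \<Rightarrow> real) set" where
  "Dset I = (\<lambda>f a. if a \<in> I then f a else 0) ` (PiE I (\<lambda>_. \<rat>))"

lemma countable_Dset: "finite I \<Longrightarrow> countable (Dset I)"
  unfolding Dset_def by (intro countable_image countable_PiE countable_rat)

lemma rat_seq: "\<exists>s. (\<forall>n. s n \<in> \<rat>) \<and> s \<longlonglongrightarrow> (r::real)"
  using closure_sequential[of r "\<rat>"] Rats_closure_real by auto

lemma dense_ineq:
  assumes fin: "finite I" and H: "\<forall>y\<in>Dset I. c * (\<Sum>a\<in>I. (y a)\<^sup>2) \<le> qform I G y"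
  shows "c * (\<Sum>a\<in>I. (x a)\<^sup>2) \<le> qform I G x"
proof -
  obtain S where S: "\<And>a. (\<forall>n. S a n \<in> \<rat>) \<and> S a \<longlonglongrightarrow> x a"
  proof -
    have "\<forall>a. \<exists>s. (\<forall>n. s n \<in> \<rat>) \<and> s \<longlonglongrightarrow> x a" using rat_seq by blast
    then show ?thesis using that by metis
  qed
  define y where "y = (\<lambda>n a. if a \<in> I then S a n else 0)"
  have yD: "y n \<in> Dset I" for n
  proof -
    have "restrict (\<lambda>a. S a n) I \<in> PiE I (\<lambda>_. \<rat>)" using S by auto
    moreover have "y n = (\<lambda>a. if a \<in> I then restrict (\<lambda>a. S a n) I a else 0)" unfolding y_def by auto
    ultimately show ?thesis unfolding Dset_def by blast
  qed
  have yl: "(\<lambda>n. y n a) \<longlonglongrightarrow> x a" if "a \<in> I" for a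
    using S[of a] that unfolding y_def by simp
  have l1: "(\<lambda>n. c * (\<Sum>a\<in>I. (y n a)\<^sup>2)) \<longlonglongrightarrow> c * (\<Sum>a\<in>I. (x a)\<^sup>2)"
    by (intro tendsto_mult tendsto_const tendsto_sum tendsto_power yl)
  have l2: "(\<lambda>n. qform I G (y n)) \<longlonglongrightarrow> qform I G x"
    unfolding qform_def by (intro tendsto_sum tendsto_mult yl tendsto_const)
  show ?thesis using H yD by (intro LIMSEQ_le[OF l1 l2]) auto
qed

lemma qform_meas:
  assumes "\<And>a b. a \<in> I \<Longrightarrow> b \<in> I \<Longrightarrow> (\<lambda>\<omega>. G \<omega> a b) \<in> borel_measurable M"
  shows "(\<lambda>\<omega>. qform I (G \<omega>) x) \<in> borel_measurable M"
  unfolding qform_def using assms by (intro borel_measurable_sum borel_measurable_times) auto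

lemma E_meas:
  assumes "finite I" "\<And>a b. a \<in> I \<Longrightarrow> b \<in> I \<Longrightarrow> (\<lambda>\<omega>. G \<omega> a b) \<in> borel_measurable M"
  shows "{\<omega> \<in> space M. \<forall>y\<in>Dset I. c * (\<Sum>a\<in>I. (y a)\<^sup>2) \<le> qform I (G \<omega>) y} \<in> sets M"
  using assms by (intro sets.sets_Collect_countable_All' countable_Dset borel_measurable_le qform_meas) auto

lemma tail_small:
  assumes P: "prob_space M" and A: "range A \<subseteq> sets M" "incseq A" "(\<Union>k. A k) = space M"
    and e: "e > 0"
  shows "\<exists>k. measure M (space M - A k) \<le> e"
proof -
  interpret prob_space M by fact
  have "(\<lambda>k. measure M (A k)) \<longlonglongrightarrow> measure M (\<Union>k. A k)"
    using A by (intro Lim_measure_incseq) auto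
  then have "(\<lambda>k. measure M (A k)) \<longlonglongrightarrow> 1" using A(3) prob_space by simp
  then obtain k where "\<bar>measure M (A k) - 1\<bar> < e" using e
    by (metis LIMSEQ_D real_norm_def order_refl)
  moreover have "measure M (space M - A k) = 1 - measure M (A k)" using A by (intro prob_compl) auto
  ultimately show ?thesis by (intro exI[of _ k]) auto
qed

lemma rv_tight:
  fixes X :: "'w \<Rightarrow> real"
  assumes P: "prob_space M" and X: "X \<in> borel_measurable M" and e: "e > 0"
  shows "\<exists>L. measure M {\<omega>\<in>space M. X \<omega> > L} \<le> e"
proof -
  define A where "A = (\<lambda>k::nat. {\<omega>\<in>space M. X \<omega> \<le> real k})"
  have "range A \<subseteq> sets M" unfolding A_def using X by auto
  moreover have "incseq A" unfolding A_def incseq_def by auto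
  moreover have "(\<Union>k. A k) = space M"
  proof -
    have "\<omega> \<in> (\<Union>k. A k)" if "\<omega> \<in> space M" for \<omega>
    proof -
      obtain k where "X \<omega> \<le> real k" using real_arch_simple by blast
      then show ?thesis using that unfolding A_def by auto
    qed
    then show ?thesis unfolding A_def by auto
  qed
  ultimately obtain k where "measure M (space M - A k) \<le> e" using tail_small[OF P _ _ _ e] by blast
  moreover have "space M - A k = {\<omega>\<in>space M. X \<omega> > real k}" unfolding A_def by auto
  ultimately show ?thesis by auto
qed



lemma finite_idx: "finite (idx m p)"
  unfolding idx_def by auto

lemma mem_idx: "a \<in> idx m p \<longleftrightarrow> fst a < m \<and> snd a < p (fst a)"
  unfolding idx_def by (cases a) auto

lemma sum_idx: "(\<Sum>a\<in>idx m p. f a) = (\<Sum>i<m. \<Sum>j<p i. f (i, j))"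
  unfolding idx_def by (simp add: sum.Sigma)

lemma qform_scale:
  assumes "\<And>a. a \<in> I \<Longrightarrow> w a = \<rho> a * z a"
  shows "qform I Gh w = qform I (\<lambda>a b. \<rho> a * Gh a b * \<rho> b) z"
  unfolding qform_def using assms by (intro sum.cong refl) (auto simp: algebra_simps)

lemma amax_ge: "j < k \<Longrightarrow> l j \<le> amax l k"
  unfolding amax_def by (intro Max_ge) auto

lemma amax_nonneg: "0 \<le> amax l k"
  unfolding amax_def by (intro Max_ge) auto

lemma penalty_bound:
  fixes ri :: "nat \<Rightarrow> real"
  assumes r_pos: "\<And>i. i < m \<Longrightarrow> ri i > 0"
    and q: "\<And>i. i < m \<Longrightarrow> 0 < q i \<and> q i \<le> 1"
    and nz: "\<And>i j. i < m \<Longrightarrow> j < p0 i \<Longrightarrow> tz (i, j) \<noteq> 0"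
    and z: "\<And>i j. i < m \<Longrightarrow> p0 i \<le> j \<Longrightarrow> j < p i \<Longrightarrow> tz (i, j) = 0"
    and lpos: "\<And>i j. i < m \<Longrightarrow> j < p i \<Longrightarrow> lam i j > 0"
    and K: "\<And>i. i < m \<Longrightarrow> ri i * amax (lam i) (p0 i) \<le> Ki i"
    and U: "U = vnorm (idx m p) (\<lambda>a. (th a - tz a) / ri (fst a))"
  shows "(\<Sum>i<m. \<Sum>j<p i. lam i j * \<bar>tz (i, j)\<bar> powr q i) - (\<Sum>i<m. \<Sum>j<p i. lam i j * \<bar>th (i, j)\<bar> powr q i)
     \<le> (\<Sum>i<m. \<Sum>j<p0 i. \<bar>tz (i, j)\<bar> powr (q i - 1)) * (\<Sum>i<m. real (p i) * Ki i) * U"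
proof -
  define C0 where "C0 = (\<Sum>i<m. \<Sum>j<p0 i. \<bar>tz (i, j)\<bar> powr (q i - 1))"
  have C0: "0 \<le> C0" unfolding C0_def by (intro sum_nonneg) auto
  have U0: "0 \<le> U" unfolding U by (rule vnorm_nonneg)
  have tm: "lam i j * \<bar>tz (i, j)\<bar> powr q i - lam i j * \<bar>th (i, j)\<bar> powr q i \<le> Ki i * C0 * U"
    if ij: "i < m" "j < p i" for i j
  proof -
    have lp: "lam i j > 0" using lpos ij .
    have am: "amax (lam i) (p0 i) \<ge> 0" by (rule amax_nonneg)
    have rhs0: "0 \<le> ri i * amax (lam i) (p0 i) * C0 * U" using r_pos[OF ij(1)] am C0 U0 by simp
    show ?thesis
    proof (cases "j < p0 i")
      case True
      have ne: "tz (i, j) \<noteq> 0" using nz ij True by auto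
      have c1: "\<bar>tz (i, j)\<bar> powr (q i - 1) \<le> C0"
      proof -
        have "\<bar>tz (i, j)\<bar> powr (q i - 1) \<le> (\<Sum>j<p0 i. \<bar>tz (i, j)\<bar> powr (q i - 1))"
          using True by (intro member_le_sum) auto
        also have "\<dots> \<le> C0" unfolding C0_def using ij
          by (intro member_le_sum[of i "{..<m}" "\<lambda>i. \<Sum>j<p0 i. \<bar>tz (i, j)\<bar> powr (q i - 1)"]) (auto intro: sum_nonneg)
        finally show ?thesis .
      qed
      have ia: "(i, j) \<in> idx m p" using ij by (simp add: mem_idx)
      have "\<bar>(th (i, j) - tz (i, j)) / ri i\<bar> \<le> U"
        using abs_le_vnorm[OF finite_idx ia, of "\<lambda>a. (th a - tz a) / ri (fst a)"] U by simp
      then have d: "\<bar>tz (i, j) - th (i, j)\<bar> \<le> ri i * U" using r_pos[OF ij(1)]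
        by (simp add: abs_divide abs_minus_commute divide_le_eq mult.commute)
      have "lam i j * \<bar>tz (i, j)\<bar> powr q i - lam i j * \<bar>th (i, j)\<bar> powr q i
          = lam i j * (\<bar>tz (i, j)\<bar> powr q i - \<bar>th (i, j)\<bar> powr q i)" by (simp add: algebra_simps)
      also have "\<dots> \<le> lam i j * (\<bar>tz (i, j)\<bar> powr (q i - 1) * \<bar>tz (i, j) - th (i, j)\<bar>)"
        using lp q[OF ij(1)] ne by (intro mult_left_mono powr_diff_bound) auto
      also have "\<dots> \<le> amax (lam i) (p0 i) * (C0 * (ri i * U))"
        using lp c1 d C0 by (intro mult_mono amax_ge True) (auto simp: amax_nonneg)
      also have "\<dots> = ri i * amax (lam i) (p0 i) * C0 * U" by (simp add: algebra_simps)
      also have "\<dots> \<le> Ki i * C0 * U" using K[OF ij(1)] C0 U0 by (intro mult_right_mono) auto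
      finally show ?thesis .
    next
      case False
      then have "tz (i, j) = 0" using z ij by auto
      then have "lam i j * \<bar>tz (i, j)\<bar> powr q i - lam i j * \<bar>th (i, j)\<bar> powr q i \<le> 0"
        using lp by simp
      also have "0 \<le> Ki i * C0 * U" using rhs0 K[OF ij(1)] C0 U0
        by (meson mult_nonneg_nonneg order_trans r_pos[OF ij(1)] am less_imp_le)
      finally show ?thesis .
    qed
  qed
  have "(\<Sum>i<m. \<Sum>j<p i. lam i j * \<bar>tz (i, j)\<bar> powr q i) - (\<Sum>i<m. \<Sum>j<p i. lam i j * \<bar>th (i, j)\<bar> powr q i)
      = (\<Sum>i<m. \<Sum>j<p i. lam i j * \<bar>tz (i, j)\<bar> powr q i - lam i j * \<bar>th (i, j)\<bar> powr q i)"
    by (simp add: sum_subtractf)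
  also have "\<dots> \<le> (\<Sum>i<m. \<Sum>j<p i. Ki i * C0 * U)"
    using tm by (intro sum_mono) auto
  also have "\<dots> = C0 * (\<Sum>i<m. real (p i) * Ki i) * U"
    by (simp add: sum_distrib_left sum_distrib_right algebra_simps)
  finally show ?thesis unfolding C0_def .
qed



lemma det_core:
  fixes ri :: "nat \<Rightarrow> real" and Gh G :: "nat \<times> nat \<Rightarrow> nat \<times> nat \<Rightarrow> real"
  assumes r_pos: "\<And>i. i < m \<Longrightarrow> ri i > 0"
    and q: "\<And>i. i < m \<Longrightarrow> 0 < q i \<and> q i \<le> 1"
    and nz: "\<And>i j. i < m \<Longrightarrow> j < p0 i \<Longrightarrow> tz (i, j) \<noteq> 0"
    and z: "\<And>i j. i < m \<Longrightarrow> p0 i \<le> j \<Longrightarrow> j < p i \<Longrightarrow> tz (i, j) = 0"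
    and lpos: "\<And>i j. i < m \<Longrightarrow> j < p i \<Longrightarrow> lam i j > 0"
    and K: "\<And>i. i < m \<Longrightarrow> ri i * amax (lam i) (p0 i) \<le> Ki i"
    and mn: "bridge_obj m p q Gh tt lam th \<le> bridge_obj m p q Gh tt lam tz"
    and c: "0 < c" "c \<le> 1"
    and hG: "\<forall>x. c * (\<Sum>a\<in>idx m p. (x a)\<^sup>2) \<le> qform (idx m p) G x"
    and hDG: "(\<Sum>a\<in>idx m p. \<Sum>b\<in>idx m p. \<bar>ri (fst a) * Gh a b * ri (fst b) - G a b\<bar>) \<le> c / 2"
    and hS: "(\<Sum>a\<in>idx m p. \<Sum>b\<in>idx m p. \<bar>G a b\<bar>) \<le> L"
    and hv: "vnorm (idx m p) (\<lambda>a. (tt a - tz a) / ri (fst a)) \<le> Kv"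
  shows "vnorm (idx m p) (\<lambda>a. (th a - tz a) / ri (fst a))
     \<le> 2 / c * (2 * (L + 1) * Kv + (\<Sum>i<m. \<Sum>j<p0 i. \<bar>tz (i, j)\<bar> powr (q i - 1)) * (\<Sum>i<m. real (p i) * Ki i))"
proof -
  define I where "I = idx m p"
  have fin: "finite I" unfolding I_def by (rule finite_idx)
  define u where "u = (\<lambda>a. (th a - tz a) / ri (fst a))"
  define v where "v = (\<lambda>a. (tt a - tz a) / ri (fst a))"
  define D where "D = (\<lambda>a b. ri (fst a) * Gh a b * ri (fst b))"
  define U where "U = vnorm I u"
  define V where "V = vnorm I v"
  define C0 where "C0 = (\<Sum>i<m. \<Sum>j<p0 i. \<bar>tz (i, j)\<bar> powr (q i - 1))"
  define Kb where "Kb = C0 * (\<Sum>i<m. real (p i) * Ki i)"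
  have U0: "U \<ge> 0" and V0: "V \<ge> 0" unfolding U_def V_def by (auto intro: vnorm_nonneg)
  have VK: "V \<le> Kv" using hv unfolding V_def v_def I_def .
  have rI: "ri (fst a) > 0" if "a \<in> I" for a using that r_pos unfolding I_def mem_idx by auto
  have C0: "C0 \<ge> 0" unfolding C0_def by (intro sum_nonneg) auto
  have Ki0: "Ki i \<ge> 0" if "i < m" for i
    using K[OF that] r_pos[OF that] amax_nonneg[of "lam i" "p0 i"] by (meson mult_nonneg_nonneg order_trans less_imp_le)
  have Kb0: "Kb \<ge> 0" unfolding Kb_def using C0 Ki0 by (intro mult_nonneg_nonneg sum_nonneg) auto
  have pen: "(\<Sum>i<m. \<Sum>j<p i. lam i j * \<bar>tz (i, j)\<bar> powr q i) - (\<Sum>i<m. \<Sum>j<p i. lam i j * \<bar>th (i, j)\<bar> powr q i)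
     \<le> Kb * U"
    unfolding Kb_def C0_def U_def u_def I_def
    by (rule penalty_bound[where m=m and p=p and p0=p0 and q=q and lam=lam and Ki=Ki and ri=ri and th=th and tz=tz])
       (use r_pos q nz z lpos K in auto)
  have uv: "th a - tt a = ri (fst a) * (u a - v a)" if "a \<in> I" for a
  proof -
    have ne: "ri (fst a) \<noteq> 0" using rI[OF that] by simp
    have "u a - v a = (th a - tt a) / ri (fst a)"
      unfolding u_def v_def by (simp add: diff_divide_distrib[symmetric])
    then show ?thesis using ne by simp
  qed
  have q1: "qform I Gh (\<lambda>a. th a - tt a) = qform I D (\<lambda>a. u a - v a)"
    unfolding D_def using uv by (intro qform_scale) auto
  have q2: "qform I Gh (\<lambda>a. tz a - tt a) = qform I D v"
  proof -
    have "qform I Gh (\<lambda>a. tz a - tt a) = qform I D (\<lambda>a. (-1) * v a)"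
      unfolding D_def
    proof (intro qform_scale)
      fix a assume "a \<in> I"
      then have ne: "ri (fst a) \<noteq> 0" using rI[of a] by simp
      show "tz a - tt a = ri (fst a) * (-1 * v a)" unfolding v_def using ne by simp
    qed
    also have "\<dots> = qform I D v" using qform_homog[of I D "-1" v] by simp
    finally show ?thesis .
  qed
  define X1 where "X1 = (\<Sum>a\<in>I. \<Sum>b\<in>I. u a * D a b * v b)"
  define X2 where "X2 = (\<Sum>a\<in>I. \<Sum>b\<in>I. v a * D a b * u b)"
  have split: "qform I D (\<lambda>a. u a - v a) = qform I D u - (X1 + X2) + qform I D v"
    unfolding qform_split X1_def X2_def by (simp add: sum.distrib)
  have main: "qform I D u - (X1 + X2) \<le> Kb * U"
    using mn pen q1 q2 split unfolding bridge_obj_def I_def by linarith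
  define SD where "SD = (\<Sum>a\<in>I. \<Sum>b\<in>I. \<bar>D a b\<bar>)"
  define SDG where "SDG = (\<Sum>a\<in>I. \<Sum>b\<in>I. \<bar>D a b - G a b\<bar>)"
  define SG where "SG = (\<Sum>a\<in>I. \<Sum>b\<in>I. \<bar>G a b\<bar>)"
  have SDG: "SDG \<le> c / 2" using hDG unfolding SDG_def D_def I_def .
  have SG: "SG \<le> L" using hS unfolding SG_def I_def .
  have SD0: "SD \<ge> 0" unfolding SD_def by (intro sum_nonneg) auto
  have SDle: "SD \<le> SG + SDG" unfolding SD_def SG_def SDG_def
    by (simp add: sum.distrib[symmetric]) (intro sum_mono, auto)
  have ua: "\<bar>u a\<bar> \<le> U" if "a \<in> I" for a unfolding U_def by (rule abs_le_vnorm[OF fin that])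
  have va: "\<bar>v a\<bar> \<le> V" if "a \<in> I" for a unfolding V_def by (rule abs_le_vnorm[OF fin that])
  have X1: "\<bar>X1\<bar> \<le> SD * U * V" unfolding X1_def SD_def by (rule dsum_abs_bound[OF fin ua va])
  have X2: "\<bar>X2\<bar> \<le> SD * V * U" unfolding X2_def SD_def by (rule dsum_abs_bound[OF fin va ua])
  have "qform I D u - qform I G u = (\<Sum>a\<in>I. \<Sum>b\<in>I. u a * (D a b - G a b) * u b)"
    unfolding qform_def by (simp add: sum_subtractf[symmetric] algebra_simps)
  also have "\<bar>\<dots>\<bar> \<le> SDG * U * U" unfolding SDG_def by (rule dsum_abs_bound[OF fin ua ua])
  finally have QD: "qform I D u \<ge> qform I G u - SDG * U * U" by linarith
  have UU: "(\<Sum>a\<in>I. (u a)\<^sup>2) = U * U" unfolding U_def vnorm_sq[symmetric] by (simp add: power2_eq_square)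
  have QG: "qform I G u \<ge> c * (U * U)" using hG UU unfolding I_def by metis
  have "SDG * (U * U) \<le> c / 2 * (U * U)" using SDG U0 by (intro mult_right_mono) auto
  then have "SDG * U * U \<le> c / 2 * (U * U)" by (simp add: mult.assoc)
  then have low: "qform I D u \<ge> c / 2 * (U * U)" using QD QG by linarith
  have "SD * V \<le> (L + 1) * Kv" using SD0 V0 SDle SG SDG c VK by (intro mult_mono) auto
  then have "SD * U * V \<le> (L + 1) * Kv * U" using U0 by (metis mult.commute mult.left_commute mult_left_mono)
  then have "X1 + X2 \<le> 2 * ((L + 1) * Kv * U)" using X1 X2 by (simp add: algebra_simps)
  then have ineq: "c / 2 * (U * U) \<le> (2 * (L + 1) * Kv + Kb) * U" using low main by (simp add: algebra_simps)
  have L1: "L + 1 \<ge> 0" using SD0 SDle SG SDG c by linarith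
  have Kv0: "Kv \<ge> 0" using V0 VK by linarith
  have R0: "0 \<le> 2 * (L + 1) * Kv + Kb" using L1 Kv0 Kb0 by simp
  have "U \<le> 2 / c * (2 * (L + 1) * Kv + Kb)"
  proof (cases "U = 0")
    case True then show ?thesis using R0 c by simp
  next
    case False
    then have "U > 0" using U0 by simp
    then have "c / 2 * U \<le> 2 * (L + 1) * Kv + Kb" using ineq by (simp add: mult.assoc[symmetric])
    then show ?thesis using c by (simp add: field_simps)
  qed
  then show ?thesis unfolding U_def u_def I_def Kb_def C0_def .
qed



lemma set_abs_gt_meas:
  fixes f :: "'w \<Rightarrow> real"
  assumes "f \<in> borel_measurable M"
  shows "{\<omega> \<in> space M. K < \<bar>f \<omega>\<bar>} \<in> sets M"
  by (rule borel_measurable_less[OF borel_measurable_const borel_measurable_abs[OF assms]])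

lemma set_gt_meas:
  fixes f :: "'w \<Rightarrow> real"
  assumes "f \<in> borel_measurable M"
  shows "{\<omega> \<in> space M. K < f \<omega>} \<in> sets M"
  by (rule borel_measurable_less[OF borel_measurable_const assms])

lemma vnorm_meas:
  assumes "\<And>a. a \<in> I \<Longrightarrow> (\<lambda>\<omega>. f \<omega> a) \<in> borel_measurable M"
  shows "(\<lambda>\<omega>. vnorm I (f \<omega>)) \<in> borel_measurable M"
  unfolding vnorm_def
  by (rule measurable_compose[OF _ borel_measurable_sqrt]) (intro borel_measurable_sum borel_measurable_power assms)

theorem theorem1:
  fixes M :: "'w measure"
    and m :: nat and p p0 :: "nat \<Rightarrow> nat"
    and Th :: "nat \<Rightarrow> (nat \<Rightarrow> real) set"
    and \<theta>0 :: "nat \<times> nat \<Rightarrow> real"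
    and tt :: "nat \<Rightarrow> 'w \<Rightarrow> nat \<times> nat \<Rightarrow> real"
    and Gh :: "nat \<Rightarrow> 'w \<Rightarrow> nat \<times> nat \<Rightarrow> nat \<times> nat \<Rightarrow> real"
    and q :: "nat \<Rightarrow> real"
    and lam :: "nat \<Rightarrow> 'w \<Rightarrow> nat \<Rightarrow> nat \<Rightarrow> real"
    and th :: "nat \<Rightarrow> 'w \<Rightarrow> nat \<times> nat \<Rightarrow> real"
    and r :: "nat \<Rightarrow> nat \<Rightarrow> real"
    and G :: "'w \<Rightarrow> nat \<times> nat \<Rightarrow> nat \<times> nat \<Rightarrow> real"
  assumes M: "prob_space M"
    and m: "m \<ge> 1"
    and Th_vec: "\<And>i. i < m \<Longrightarrow> \<forall>x\<in>Th i. is_vec (p i) x"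
    and Th_bdd: "\<And>i. i < m \<Longrightarrow> bounded_vec (p i) (Th i)"
    and Th_cvx: "\<And>i. i < m \<Longrightarrow> convex_vec (Th i)"
    and \<theta>0_in: "\<theta>0 \<in> theta_prod m p Th"
    and p0_le: "\<And>i. i < m \<Longrightarrow> p0 i \<le> p i"
    and \<theta>0_nz: "\<And>i j. i < m \<Longrightarrow> j < p0 i \<Longrightarrow> \<theta>0 (i, j) \<noteq> 0"
    and \<theta>0_z: "\<And>i j. i < m \<Longrightarrow> p0 i \<le> j \<Longrightarrow> j < p i \<Longrightarrow> \<theta>0 (i, j) = 0"
    and tt_meas: "\<And>n a. a \<in> idx m p \<Longrightarrow> (\<lambda>\<omega>. tt n \<omega> a) \<in> borel_measurable M"
    and tt_supp: "\<And>n \<omega> a. a \<notin> idx m p \<Longrightarrow> tt n \<omega> a = 0"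
    and Gh_meas: "\<And>n a b. a \<in> idx m p \<Longrightarrow> b \<in> idx m p \<Longrightarrow>
                    (\<lambda>\<omega>. Gh n \<omega> a b) \<in> borel_measurable M"
    and Gh_pd: "\<And>n. AE \<omega> in M. posdef_mat (idx m p) (Gh n \<omega>)"
    and q: "\<And>i. i < m \<Longrightarrow> 0 < q i \<and> q i \<le> 1"
    and lam_meas: "\<And>n i j. i < m \<Longrightarrow> j < p i \<Longrightarrow> (\<lambda>\<omega>. lam n \<omega> i j) \<in> borel_measurable M"
    and lam_pos: "\<And>n \<omega> i j. \<omega> \<in> space M \<Longrightarrow> i < m \<Longrightarrow> j < p i \<Longrightarrow> lam n \<omega> i j > 0"
    and th_meas: "\<And>n a. a \<in> idx m p \<Longrightarrow> (\<lambda>\<omega>. th n \<omega> a) \<in> borel_measurable M"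
    and th_min: "\<And>n. AE \<omega> in M.
        th n \<omega> \<in> vclosure (idx m p) (theta_prod m p Th) \<and>
        (\<forall>\<theta>\<in>vclosure (idx m p) (theta_prod m p Th).
            bridge_obj m p q (Gh n \<omega>) (tt n \<omega>) (lam n \<omega>) (th n \<omega>)
              \<le> bridge_obj m p q (Gh n \<omega>) (tt n \<omega>) (lam n \<omega>) \<theta>)"
    and r_pos: "\<And>n i. i < m \<Longrightarrow> r n i > 0"
    and r_lim: "\<And>i. i < m \<Longrightarrow> (\<lambda>n. r n i) \<longlonglongrightarrow> 0"
    and G_meas: "\<And>a b. a \<in> idx m p \<Longrightarrow> b \<in> idx m p \<Longrightarrow> (\<lambda>\<omega>. G \<omega> a b) \<in> borel_measurable M"
    and G_pd: "\<And>\<omega>. \<omega> \<in> space M \<Longrightarrow> posdef_mat (idx m p) (G \<omega>)"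
    and A1: "\<And>a b. a \<in> idx m p \<Longrightarrow> b \<in> idx m p \<Longrightarrow>
        conv_in_prob M (\<lambda>n \<omega>. r n (fst a) * Gh n \<omega> a b * r n (fst b)) (\<lambda>\<omega>. G \<omega> a b)"
    and A2: "bounded_in_prob M
        (\<lambda>n \<omega>. vnorm (idx m p) (\<lambda>a. (tt n \<omega> a - \<theta>0 a) / r n (fst a)))"
    and B1: "\<And>i. i < m \<Longrightarrow>
        bounded_in_prob M (\<lambda>n \<omega>. r n i * amax (lam n \<omega> i) (p0 i))"
  shows "bounded_in_prob M
        (\<lambda>n \<omega>. vnorm (idx m p) (\<lambda>a. (th n \<omega> a - \<theta>0 a) / r n (fst a)))"
proof -
  interpret prob_space M by (rule M)
  define I where "I = idx m p"
  have fin: "finite I" unfolding I_def by (rule finite_idx)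
  define X where "X = (\<lambda>n \<omega>. vnorm (idx m p) (\<lambda>a. (th n \<omega> a - \<theta>0 a) / r n (fst a)))"
  have Xmeas: "X n \<in> borel_measurable M" for n
    unfolding X_def by (intro vnorm_meas borel_measurable_divide borel_measurable_diff th_meas borel_measurable_const)
  have goal: "\<exists>K N. \<forall>n\<ge>N. measure M {\<omega> \<in> space M. \<bar>X n \<omega>\<bar> > K} \<le> e" if e: "e > 0" for e
  proof -
    define e5 where "e5 = e / 5"
    have e5: "e5 > 0" unfolding e5_def using e by simp
    define Ek where "Ek = (\<lambda>k::nat. {\<omega> \<in> space M. \<forall>y\<in>Dset I. (1 / real (Suc k)) * (\<Sum>a\<in>I. (y a)\<^sup>2) \<le> qform I (G \<omega>) y})"
    have Ek_sets: "range Ek \<subseteq> sets M"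
    proof -
      have "Ek k \<in> sets M" for k
        unfolding Ek_def by (rule E_meas[OF fin]) (use G_meas in \<open>auto simp: I_def\<close>)
      then show ?thesis by auto
    qed
    have Ek_inc: "incseq Ek"
    proof (rule incseq_SucI)
      fix k
      show "Ek k \<subseteq> Ek (Suc k)"
      proof
        fix \<omega> assume "\<omega> \<in> Ek k"
        then have w: "\<omega> \<in> space M" "\<forall>y\<in>Dset I. (1 / real (Suc k)) * (\<Sum>a\<in>I. (y a)\<^sup>2) \<le> qform I (G \<omega>) y"
          unfolding Ek_def by auto
        have "(1 / real (Suc (Suc k))) * (\<Sum>a\<in>I. (y a)\<^sup>2) \<le> qform I (G \<omega>) y" if "y \<in> Dset I" for y
        proof -
          have "(1 / real (Suc (Suc k))) * (\<Sum>a\<in>I. (y a)\<^sup>2) \<le> (1 / real (Suc k)) * (\<Sum>a\<in>I. (y a)\<^sup>2)"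
            by (intro mult_right_mono sum_nonneg divide_left_mono) auto
          moreover have "(1 / real (Suc k)) * (\<Sum>a\<in>I. (y a)\<^sup>2) \<le> qform I (G \<omega>) y" using w(2) that by blast
          ultimately show ?thesis by linarith
        qed
        then show "\<omega> \<in> Ek (Suc k)" using w(1) unfolding Ek_def by auto
      qed
    qed
    have Ek_un: "(\<Union>k. Ek k) = space M"
    proof
      show "(\<Union>k. Ek k) \<subseteq> space M" unfolding Ek_def by auto
      show "space M \<subseteq> (\<Union>k. Ek k)"
      proof
        fix \<omega> assume w: "\<omega> \<in> space M"
        obtain c where c: "c > 0" "\<forall>x. c * (\<Sum>a\<in>I. (x a)\<^sup>2) \<le> qform I (G \<omega>) x"
          using pd_coercive[OF fin] G_pd[OF w] unfolding I_def by blast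
        obtain k where k: "inverse (real k) < c" "k > 0" using ex_inverse_of_nat_less[OF c(1)] by blast
        have "1 / real (Suc k) \<le> 1 / real k" using k(2) by (intro divide_left_mono) auto
        then have "1 / real (Suc k) \<le> c" using k(1) by (simp add: inverse_eq_divide)
        have "\<forall>y\<in>Dset I. (1 / real (Suc k)) * (\<Sum>a\<in>I. (y a)\<^sup>2) \<le> qform I (G \<omega>) y"
        proof
          fix y assume "y \<in> Dset I"
          have "(1 / real (Suc k)) * (\<Sum>a\<in>I. (y a)\<^sup>2) \<le> c * (\<Sum>a\<in>I. (y a)\<^sup>2)"
            using \<open>1 / real (Suc k) \<le> c\<close> by (intro mult_right_mono sum_nonneg) auto
          also have "\<dots> \<le> qform I (G \<omega>) y" using c(2) by blast
          finally show "(1 / real (Suc k)) * (\<Sum>a\<in>I. (y a)\<^sup>2) \<le> qform I (G \<omega>) y" .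
        qed
        then show "\<omega> \<in> (\<Union>k. Ek k)" using w unfolding Ek_def by blast
      qed
    qed
    obtain k0 where k0: "measure M (space M - Ek k0) \<le> e5"
      using tail_small[OF M Ek_sets Ek_inc Ek_un e5] by blast
    define c where "c = 1 / real (Suc k0)"
    have c: "0 < c" "c \<le> 1" unfolding c_def by auto
    have cE: "\<forall>x. c * (\<Sum>a\<in>I. (x a)\<^sup>2) \<le> qform I (G \<omega>) x" if "\<omega> \<in> Ek k0" for \<omega>
    proof -
      have "\<forall>y\<in>Dset I. c * (\<Sum>a\<in>I. (y a)\<^sup>2) \<le> qform I (G \<omega>) y"
        using that unfolding Ek_def c_def by blast
      then show ?thesis using dense_ineq[OF fin] by blast
    qed
    have Ek0_sets: "Ek k0 \<in> sets M" using Ek_sets by auto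
    define SG where "SG = (\<lambda>\<omega>. \<Sum>a\<in>I. \<Sum>b\<in>I. \<bar>G \<omega> a b\<bar>)"
    have SG_meas: "SG \<in> borel_measurable M"
      unfolding SG_def using G_meas unfolding I_def by (intro borel_measurable_sum borel_measurable_abs) auto
    obtain L where L: "measure M {\<omega>\<in>space M. SG \<omega> > L} \<le> e5"
      using rv_tight[OF M SG_meas e5] by blast
    define V where "V = (\<lambda>n \<omega>. vnorm (idx m p) (\<lambda>a. (tt n \<omega> a - \<theta>0 a) / r n (fst a)))"
    obtain Kv N1 where KN1: "\<forall>n\<ge>N1. measure M {\<omega> \<in> space M. \<bar>V n \<omega>\<bar> > Kv} \<le> e5"
      and V_meas: "\<And>n. V n \<in> borel_measurable M"
    proof -
      have "\<And>n. V n \<in> borel_measurable M" "\<forall>e>0. \<exists>K N. \<forall>n\<ge>N. measure M {\<omega> \<in> space M. \<bar>V n \<omega>\<bar> > K} \<le> e"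
        using A2 unfolding bounded_in_prob_def V_def by auto
      then show ?thesis using that e5 by blast
    qed
    define em where "em = e5 / real m"
    have em: "em > 0" unfolding em_def using e5 m by simp
    have "\<forall>i\<in>{..<m}. \<exists>KN. \<forall>n\<ge>snd KN. measure M {\<omega> \<in> space M. \<bar>r n i * amax (lam n \<omega> i) (p0 i)\<bar> > fst KN} \<le> em"
    proof
      fix i assume "i \<in> {..<m}"
      then obtain K0 N0 where "\<forall>n\<ge>N0. measure M {\<omega> \<in> space M. \<bar>r n i * amax (lam n \<omega> i) (p0 i)\<bar> > K0} \<le> em"
        using B1[of i] em unfolding bounded_in_prob_def by auto
      then show "\<exists>KN. \<forall>n\<ge>snd KN. measure M {\<omega> \<in> space M. \<bar>r n i * amax (lam n \<omega> i) (p0 i)\<bar> > fst KN} \<le> em"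
        by (intro exI[of _ "(K0, N0)"]) simp
    qed
    then obtain KN where KN: "\<And>i. i < m \<Longrightarrow> \<forall>n\<ge>snd (KN i). measure M {\<omega> \<in> space M. \<bar>r n i * amax (lam n \<omega> i) (p0 i)\<bar> > fst (KN i)} \<le> em"
    proof -
      obtain KN where "\<forall>i\<in>{..<m}. \<forall>n\<ge>snd (KN i). measure M {\<omega> \<in> space M. \<bar>r n i * amax (lam n \<omega> i) (p0 i)\<bar> > fst (KN i)} \<le> em"
        using bchoice[OF \<open>\<forall>i\<in>{..<m}. \<exists>KN. _\<close>] by blast
      then show ?thesis using that[of KN] by simp
    qed
    define Kf where "Kf = (\<lambda>i. fst (KN i))"
    define N3 where "N3 = (\<Sum>i<m. snd (KN i))"
    have B1_meas: "(\<lambda>\<omega>. r n i * amax (lam n \<omega> i) (p0 i)) \<in> borel_measurable M" if "i < m" for n i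
      using B1[OF that] unfolding bounded_in_prob_def by blast
    define D where "D = (\<lambda>n \<omega> a b. r n (fst a) * Gh n \<omega> a b * r n (fst b))"
    define \<eta> where "\<eta> = c / (2 * (real (card I) ^ 2 + 1))"
    have \<eta>: "\<eta> > 0" unfolding \<eta>_def using c by (intro divide_pos_pos mult_pos_pos add_nonneg_pos) auto
    define ep where "ep = e5 / (real (card (I \<times> I)) + 1)"
    have ep: "ep > 0" unfolding ep_def using e5 by (simp add: add_pos_nonneg)
    have "\<forall>ab\<in>I \<times> I. eventually (\<lambda>n. measure M {\<omega> \<in> space M. \<bar>D n \<omega> (fst ab) (snd ab) - G \<omega> (fst ab) (snd ab)\<bar> > \<eta>} < ep) sequentially"
    proof
      fix ab assume ab: "ab \<in> I \<times> I"
      have "(\<lambda>n. measure M {\<omega> \<in> space M. \<bar>D n \<omega> (fst ab) (snd ab) - G \<omega> (fst ab) (snd ab)\<bar> > \<eta>}) \<longlonglongrightarrow> 0"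
        using A1[of "fst ab" "snd ab"] ab \<eta> unfolding conv_in_prob_def D_def I_def by (auto simp: mem_Times_iff)
      then show "eventually (\<lambda>n. measure M {\<omega> \<in> space M. \<bar>D n \<omega> (fst ab) (snd ab) - G \<omega> (fst ab) (snd ab)\<bar> > \<eta>} < ep) sequentially"
        using ep by (rule order_tendstoD)
    qed
    then have "eventually (\<lambda>n. \<forall>ab\<in>I \<times> I. measure M {\<omega> \<in> space M. \<bar>D n \<omega> (fst ab) (snd ab) - G \<omega> (fst ab) (snd ab)\<bar> > \<eta>} < ep) sequentially"
      using fin by (intro eventually_ball_finite) auto
    then obtain N2 where N2: "\<And>n ab. n \<ge> N2 \<Longrightarrow> ab \<in> I \<times> I \<Longrightarrow> measure M {\<omega> \<in> space M. \<bar>D n \<omega> (fst ab) (snd ab) - G \<omega> (fst ab) (snd ab)\<bar> > \<eta>} < ep"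
      unfolding eventually_sequentially by blast
    have A1_meas: "(\<lambda>\<omega>. D n \<omega> a b - G \<omega> a b) \<in> borel_measurable M" if "a \<in> I" "b \<in> I" for n a b
    proof -
      have "(\<lambda>\<omega>. r n (fst a) * Gh n \<omega> a b * r n (fst b)) \<in> borel_measurable M"
        using A1[of a b] that unfolding conv_in_prob_def I_def by blast
      then show ?thesis unfolding D_def using G_meas[of a b] that unfolding I_def by (intro borel_measurable_diff) auto
    qed
    define C0 where "C0 = (\<Sum>i<m. \<Sum>j<p0 i. \<bar>\<theta>0 (i, j)\<bar> powr (q i - 1))"
    define K where "K = 2 / c * (2 * (L + 1) * Kv + C0 * (\<Sum>i<m. real (p i) * Kf i))"
    define N where "N = N1 + N2 + N3"
    have "\<forall>n\<ge>N. measure M {\<omega> \<in> space M. \<bar>X n \<omega>\<bar> > K} \<le> e"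
    proof (intro allI impI)
      fix n assume nN: "n \<ge> N"
      then have n1: "n \<ge> N1" and n2: "n \<ge> N2" unfolding N_def by auto
      have n3: "n \<ge> snd (KN i)" if "i < m" for i
      proof -
        have "snd (KN i) \<le> N3" unfolding N3_def using that by (intro member_le_sum) auto
        then show ?thesis using nN unfolding N_def by linarith
      qed
      define Pn where "Pn = (\<lambda>\<omega>. th n \<omega> \<in> vclosure (idx m p) (theta_prod m p Th) \<and>
        (\<forall>\<theta>\<in>vclosure (idx m p) (theta_prod m p Th).
            bridge_obj m p q (Gh n \<omega>) (tt n \<omega>) (lam n \<omega>) (th n \<omega>)
              \<le> bridge_obj m p q (Gh n \<omega>) (tt n \<omega>) (lam n \<omega>) \<theta>))"
      have "AE \<omega> in M. Pn \<omega>" unfolding Pn_def by (rule th_min)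
      then obtain Nn where Nn: "{\<omega> \<in> space M. \<not> Pn \<omega>} \<subseteq> Nn" "emeasure M Nn = 0" "Nn \<in> sets M"
        by (rule AE_E)
      define B1s where "B1s = {\<omega>\<in>space M. SG \<omega> > L}"
      define B2s where "B2s = {\<omega> \<in> space M. \<bar>V n \<omega>\<bar> > Kv}"
      define B3s where "B3s = (\<Union>i\<in>{..<m}. {\<omega> \<in> space M. \<bar>r n i * amax (lam n \<omega> i) (p0 i)\<bar> > Kf i})"
      define B4s where "B4s = (\<Union>ab\<in>I \<times> I. {\<omega> \<in> space M. \<bar>D n \<omega> (fst ab) (snd ab) - G \<omega> (fst ab) (snd ab)\<bar> > \<eta>})"
      have s1: "B1s \<in> sets M" unfolding B1s_def by (rule set_gt_meas[OF SG_meas])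
      have s2: "B2s \<in> sets M" unfolding B2s_def by (rule set_abs_gt_meas[OF V_meas])
      have s3: "B3s \<in> sets M" unfolding B3s_def using B1_meas by (intro sets.finite_UN set_abs_gt_meas) auto
      have s4: "B4s \<in> sets M" unfolding B4s_def using A1_meas fin
        by (intro sets.finite_UN set_abs_gt_meas) (auto simp: mem_Times_iff)
      have s0: "space M - Ek k0 \<in> sets M" using Ek0_sets by auto
      have m3: "measure M B3s \<le> e5"
      proof -
        have "measure M B3s \<le> (\<Sum>i<m. measure M {\<omega> \<in> space M. \<bar>r n i * amax (lam n \<omega> i) (p0 i)\<bar> > Kf i})"
          unfolding B3s_def using B1_meas by (intro measure_UNION_le set_abs_gt_meas) auto
        also have "\<dots> \<le> (\<Sum>i<m. em)" using KN n3 unfolding Kf_def by (intro sum_mono) auto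
        also have "\<dots> = e5" unfolding em_def using m by simp
        finally show ?thesis .
      qed
      have m4: "measure M B4s \<le> e5"
      proof -
        have "measure M B4s \<le> (\<Sum>ab\<in>I \<times> I. measure M {\<omega> \<in> space M. \<bar>D n \<omega> (fst ab) (snd ab) - G \<omega> (fst ab) (snd ab)\<bar> > \<eta>})"
          unfolding B4s_def using A1_meas fin by (intro measure_UNION_le set_abs_gt_meas) (auto simp: mem_Times_iff)
        also have "\<dots> \<le> (\<Sum>ab\<in>I \<times> I. ep)" using N2 n2 by (intro sum_mono less_imp_le) auto
        also have "\<dots> = real (card (I \<times> I)) * ep" by simp
        also have "\<dots> \<le> e5" unfolding ep_def using e5 by (simp add: field_simps)
        finally show ?thesis .
      qed
      have mN: "measure M Nn = 0" using Nn(2) by (simp add: measure_def)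
      have sub: "{\<omega> \<in> space M. \<bar>X n \<omega>\<bar> > K} \<subseteq> (space M - Ek k0) \<union> B1s \<union> B2s \<union> B3s \<union> B4s \<union> Nn"
      proof
        fix \<omega> assume w: "\<omega> \<in> {\<omega> \<in> space M. \<bar>X n \<omega>\<bar> > K}"
        show "\<omega> \<in> (space M - Ek k0) \<union> B1s \<union> B2s \<union> B3s \<union> B4s \<union> Nn"
        proof (rule ccontr)
          assume nb: "\<not> ?thesis"
          have g1: "\<omega> \<in> space M" using w by simp
          have g2: "\<omega> \<in> Ek k0" using nb g1 by blast
          have g3: "\<omega> \<notin> B1s" using nb by blast
          have g4: "\<omega> \<notin> B2s" using nb by blast
          have g5: "\<omega> \<notin> B3s" using nb by blast
          have g6: "\<omega> \<notin> B4s" using nb by blast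
          have g7: "\<omega> \<notin> Nn" using nb by blast
          have "\<omega> \<notin> {\<omega> \<in> space M. \<not> Pn \<omega>}" using Nn(1) g7 by (meson subsetD)
          then have "Pn \<omega>" using g1 by blast
          then have mn: "\<forall>\<theta>\<in>vclosure (idx m p) (theta_prod m p Th).
              bridge_obj m p q (Gh n \<omega>) (tt n \<omega>) (lam n \<omega>) (th n \<omega>)
                \<le> bridge_obj m p q (Gh n \<omega>) (tt n \<omega>) (lam n \<omega>) \<theta>"
            unfolding Pn_def by (rule conjunct2)
          have h1: "\<forall>a. a \<notin> idx m p \<longrightarrow> \<theta>0 a = 0" using \<theta>0_in unfolding theta_prod_def by blast
          have h2: "\<forall>e>0. vnorm (idx m p) (\<lambda>a. \<theta>0 a - \<theta>0 a) < e" by (simp add: vnorm_def)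
          have t0c: "\<theta>0 \<in> vclosure (idx m p) (theta_prod m p Th)"
            unfolding vclosure_def using h1 h2 \<theta>0_in by blast
          have hG: "\<forall>x. c * (\<Sum>a\<in>idx m p. (x a)\<^sup>2) \<le> qform (idx m p) (G \<omega>) x"
            using cE[OF g2] unfolding I_def .
          have hDG: "(\<Sum>a\<in>idx m p. \<Sum>b\<in>idx m p. \<bar>r n (fst a) * Gh n \<omega> a b * r n (fst b) - G \<omega> a b\<bar>) \<le> c / 2"
          proof -
            have each: "\<bar>r n (fst a) * Gh n \<omega> a b * r n (fst b) - G \<omega> a b\<bar> \<le> \<eta>" if "a \<in> I" "b \<in> I" for a b
            proof -
              have "(a, b) \<in> I \<times> I" using that by simp
              then have "\<omega> \<notin> {\<omega> \<in> space M. \<bar>D n \<omega> a b - G \<omega> a b\<bar> > \<eta>}"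
              proof -
                have "{\<omega> \<in> space M. \<bar>D n \<omega> a b - G \<omega> a b\<bar> > \<eta>} \<subseteq> B4s"
                  unfolding B4s_def using UN_upper[OF \<open>(a, b) \<in> I \<times> I\<close>, of "\<lambda>ab. {\<omega> \<in> space M. \<bar>D n \<omega> (fst ab) (snd ab) - G \<omega> (fst ab) (snd ab)\<bar> > \<eta>}"]
                  by simp
                then show ?thesis using g6 by blast
              qed
              then show ?thesis using g1 by (simp add: D_def not_less)
            qed
            have "(\<Sum>a\<in>I. \<Sum>b\<in>I. \<bar>r n (fst a) * Gh n \<omega> a b * r n (fst b) - G \<omega> a b\<bar>) \<le> (\<Sum>a\<in>I. \<Sum>b\<in>I. \<eta>)"
              using each by (intro sum_mono) auto
            also have "\<dots> = real (card I) ^ 2 * \<eta>" by (simp add: power2_eq_square)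
            also have "\<dots> \<le> c / 2"
            proof -
              have f: "real (card I) ^ 2 / (real (card I) ^ 2 + 1) \<le> 1"
                by (subst divide_le_eq_1) (auto simp: add_nonneg_pos)
              have eq: "real (card I) ^ 2 * \<eta> = c / 2 * (real (card I) ^ 2 / (real (card I) ^ 2 + 1))"
                unfolding \<eta>_def by (simp add: field_simps)
              have "c / 2 * (real (card I) ^ 2 / (real (card I) ^ 2 + 1)) \<le> c / 2 * 1"
                using f c by (intro mult_left_mono) auto
              then show ?thesis using eq by linarith
            qed
            finally show ?thesis unfolding I_def .
          qed
          have hS: "(\<Sum>a\<in>idx m p. \<Sum>b\<in>idx m p. \<bar>G \<omega> a b\<bar>) \<le> L"
            using g1 g3 unfolding B1s_def SG_def I_def by auto
          have hv: "vnorm (idx m p) (\<lambda>a. (tt n \<omega> a - \<theta>0 a) / r n (fst a)) \<le> Kv"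
            using g1 g4 unfolding B2s_def V_def by auto
          have hK: "r n i * amax (lam n \<omega> i) (p0 i) \<le> Kf i" if "i < m" for i
          proof -
            have "\<omega> \<notin> {\<omega> \<in> space M. \<bar>r n i * amax (lam n \<omega> i) (p0 i)\<bar> > Kf i}"
            proof -
              have "i \<in> {..<m}" using that by simp
              then have "{\<omega> \<in> space M. \<bar>r n i * amax (lam n \<omega> i) (p0 i)\<bar> > Kf i} \<subseteq> B3s"
                unfolding B3s_def by (rule UN_upper)
              then show ?thesis using g5 by blast
            qed
            then show ?thesis using g1 by (simp add: not_less)
          qed
          have mn0: "bridge_obj m p q (Gh n \<omega>) (tt n \<omega>) (lam n \<omega>) (th n \<omega>)
                \<le> bridge_obj m p q (Gh n \<omega>) (tt n \<omega>) (lam n \<omega>) \<theta>0"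
            using mn t0c by blast
          have "X n \<omega> \<le> K"
            unfolding X_def K_def C0_def
            by (rule det_core[where m=m and p=p and p0=p0 and q=q and lam="lam n \<omega>" and Ki=Kf and ri="r n"
                  and th="th n \<omega>" and tz=\<theta>0 and Gh="Gh n \<omega>" and tt="tt n \<omega>" and G="G \<omega>" and c=c and L=L and Kv=Kv,
                  OF r_pos q \<theta>0_nz \<theta>0_z lam_pos[OF g1] hK mn0 c(1) c(2) hG hDG hS hv])
          moreover have "X n \<omega> \<ge> 0" unfolding X_def by (rule vnorm_nonneg)
          ultimately show False using w by auto
        qed
      qed
      have "measure M {\<omega> \<in> space M. \<bar>X n \<omega>\<bar> > K} \<le> measure M ((space M - Ek k0) \<union> B1s \<union> B2s \<union> B3s \<union> B4s \<union> Nn)"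
        using sub s0 s1 s2 s3 s4 Nn(3) by (intro finite_measure_mono) auto
      also have "\<dots> \<le> measure M (space M - Ek k0) + measure M B1s + measure M B2s + measure M B3s + measure M B4s + measure M Nn"
      proof -
        have u1: "measure M ((space M - Ek k0) \<union> B1s) \<le> measure M (space M - Ek k0) + measure M B1s"
          using s0 s1 by (rule measure_Un_le)
        have u2: "measure M ((space M - Ek k0) \<union> B1s \<union> B2s) \<le> measure M ((space M - Ek k0) \<union> B1s) + measure M B2s"
          using s0 s1 s2 by (intro measure_Un_le) auto
        have u3: "measure M ((space M - Ek k0) \<union> B1s \<union> B2s \<union> B3s) \<le> measure M ((space M - Ek k0) \<union> B1s \<union> B2s) + measure M B3s"
          using s0 s1 s2 s3 by (intro measure_Un_le) auto
        have u4: "measure M ((space M - Ek k0) \<union> B1s \<union> B2s \<union> B3s \<union> B4s) \<le> measure M ((space M - Ek k0) \<union> B1s \<union> B2s \<union> B3s) + measure M B4s"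
          using s0 s1 s2 s3 s4 by (intro measure_Un_le) auto
        have u5: "measure M ((space M - Ek k0) \<union> B1s \<union> B2s \<union> B3s \<union> B4s \<union> Nn) \<le> measure M ((space M - Ek k0) \<union> B1s \<union> B2s \<union> B3s \<union> B4s) + measure M Nn"
          using s0 s1 s2 s3 s4 Nn(3) by (intro measure_Un_le) auto
        show ?thesis using u1 u2 u3 u4 u5 by linarith
      qed
      also have "\<dots> \<le> e5 + e5 + e5 + e5 + e5 + 0"
        using k0 L KN1 n1 m3 m4 mN unfolding B1s_def B2s_def by (intro add_mono) auto
      also have "\<dots> = e" unfolding e5_def by simp
      finally show "measure M {\<omega> \<in> space M. \<bar>X n \<omega>\<bar> > K} \<le> e" .
    qed
    then show ?thesis by blast
  qed
  show ?thesis unfolding bounded_in_prob_def X_def[symmetric] using Xmeas goal by blast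
qed

end
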